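(* Let $A_n(x) = x^n + a_1 x^{n-1} + \dots + a_n$ be a (complex) polynomial whose distinct roots $x_1, \dots, x_m$ have known multiplicities $\alpha_1, \dots, \alpha_m$ (positive integers with $\alpha_1 + \dots + \alpha_m = n$). Given initial approximations $x_1^{[0]}, \dots, x_m^{[0]}$, define iterates for $k = 0,1,2,\dots$ and $i = 1,\dots,m$ by $$x_i^{[k+1]} = x_i^{[k]} - \alpha_i \left[ S_i^{[k]}(x_i^{[k]}) + \sum_{j=1, j\neq i}^{m} \alpha_j \,(x_j^{[k]} - x_i^{[k]})^{-2}\, A_n(x_j^{[k]}) \left[ \frac{S_j^{[k]}(x_j^{[k]})}{\alpha_j}\right]^{\alpha_j - 1} \Big/ Q_j^{[k]}(x_j^{[k]}) \right]^{-1},$$ where for $p = 1,\dots,m$, $$Q_p^{[k]}(x) = \prod_{l=1, l\neq p}^{m} (x - x_l^{[k]})^{\alpha_l}, \qquad S_p^{[k]}(x) = \frac{A_n'(x)}{A_n(x)} - \frac{Q_p^{[k]\prime}(x)}{Q_p^{[k]}(x)}.$$ Let $d = \min_{i\neq j} |x_i - x_j|$, and let $c, q$ be real positive constants such that $q < 1$, $d - 2c > 0$, and $$2c^2 n (d-2c)^{-2}\Big[ c(d-2c)^{-1} + \big(1 + c(d-2c)^{-1}\big)\,[N + MN + M] \Big] < \alpha_i \quad \text{for all } i = 1,\dots,m,$$ where $M = \big(1 + c/(d-2c)\big)^n - 1$ and $N = \big(1 + n\,(c/(d-2c))^2\big)^{n-1} - 1$. Suppose the initial approximations satisfy $|x_i^{[0]}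 - x_i| < cq$ for $i = 1,\dots,m$. Then for every natural number $k$, $$|x_i^{[k]} - x_i| < c\, q^{4^k}, \qquad i = 1,\dots,m.$$
   Context: The iteration is understood in the sense that all quantities appearing in the formula are defined (the relevant denominators are nonzero). $Q_p^{[k]\prime}$ denotes the derivative of $Q_p^{[k]}$ with respect to $x$, and $A_n'$ the derivative of $A_n$. *)

theory Defs
  imports Complex_Main "HOL-Computational_Algebra.Polynomial"
begin

text \<open>Indices of roots and approximations run over {..<m} (i.e. 0,...,m-1 instead of 1,...,m).
  An approximation vector is a function xk :: nat => complex.\<close>

definition Qpoly :: "nat \<Rightarrow> (nat \<Rightarrow> nat) \<Rightarrow> nat \<Rightarrow> (nat \<Rightarrow> complex) \<Rightarrow> complex poly" where
  "Qpoly m alpha p xk = (\<Prod>l\<in>{..<m} - {p}. [:- xk l, 1:] ^ alpha l)"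

definition Sfun :: "complex poly \<Rightarrow> nat \<Rightarrow> (nat \<Rightarrow> nat) \<Rightarrow> nat \<Rightarrow> (nat \<Rightarrow> complex) \<Rightarrow> complex \<Rightarrow> complex" where
  "Sfun A m alpha p xk x =
     poly (pderiv A) x / poly A x
     - poly (pderiv (Qpoly m alpha p xk)) x / poly (Qpoly m alpha p xk) x"

definition corr :: "complex poly \<Rightarrow> nat \<Rightarrow> (nat \<Rightarrow> nat) \<Rightarrow> nat \<Rightarrow> (nat \<Rightarrow> complex) \<Rightarrow> complex" where
  "corr A m alpha i xk =
     Sfun A m alpha i xk (xk i)
     + (\<Sum>j\<in>{..<m} - {i}.
          of_nat (alpha j) * inverse ((xk j - xk i) ^ 2) * poly A (xk j)
          * (Sfun A m alpha j xk (xk j) / of_nat (alpha j)) ^ (alpha j - 1)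
          / poly (Qpoly m alpha j xk) (xk j))"

definition step :: "complex poly \<Rightarrow> nat \<Rightarrow> (nat \<Rightarrow> nat) \<Rightarrow> (nat \<Rightarrow> complex) \<Rightarrow> (nat \<Rightarrow> complex)" where
  "step A m alpha xk = (\<lambda>i. xk i - of_nat (alpha i) * inverse (corr A m alpha i xk))"

primrec iter :: "complex poly \<Rightarrow> nat \<Rightarrow> (nat \<Rightarrow> nat) \<Rightarrow> (nat \<Rightarrow> complex) \<Rightarrow> nat \<Rightarrow> (nat \<Rightarrow> complex)" where
  "iter A m alpha x0 0 = x0"
| "iter A m alpha x0 (Suc k) = step A m alpha (iter A m alpha x0 k)"

definition step_defined :: "complex poly \<Rightarrow> nat \<Rightarrow> (nat \<Rightarrow> nat) \<Rightarrow> (nat \<Rightarrow> complex) \<Rightarrow> bool" where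
  "step_defined A m alpha xk \<longleftrightarrow>
     (\<forall>i<m. poly A (xk i) \<noteq> 0
          \<and> poly (Qpoly m alpha i xk) (xk i) \<noteq> 0
          \<and> (\<forall>j<m. j \<noteq> i \<longrightarrow> xk j \<noteq> xk i)
          \<and> corr A m alpha i xk \<noteq> 0)"

end

theory Submission imports Defs begin

lemma poly_pderiv_lin_pow:
  fixes a x :: complex
  assumes "x \<noteq> a"
  shows "poly (pderiv ([:-a,1:]^k)) x = (x - a)^k * (of_nat k / (x - a))"
proof (cases k)
  case 0 then show ?thesis by simp
next
  case (Suc j)
  have "poly (pderiv ([:-a,1:]^k)) x = of_nat k * (x-a)^j"
    using Suc by (simp add: pderiv_power_Suc pderiv_pCons del: power_Suc)
  also have "\<dots> = (x - a)^k * (of_nat k / (x - a))"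
    using Suc assms by (simp add: field_simps)
  finally show ?thesis .
qed

lemma poly_pderiv_prod_lin:
  fixes a :: "nat \<Rightarrow> complex" and x :: complex
  assumes "finite S" "\<forall>l\<in>S. x \<noteq> a l"
  shows "poly (pderiv (\<Prod>l\<in>S. [:-a l,1:]^k l)) x
       = poly (\<Prod>l\<in>S. [:-a l,1:]^k l) x * (\<Sum>l\<in>S. of_nat (k l) / (x - a l))"
  using assms
proof (induction S rule: finite_induct)
  case empty then show ?case by simp
next
  case (insert l S)
  then show ?case
    by (simp add: pderiv_mult poly_pderiv_lin_pow algebra_simps)
qed

lemma logderiv_prod_lin:
  fixes a :: "nat \<Rightarrow> complex" and x :: complex
  assumes "finite S" "\<forall>l\<in>S. x \<noteq> a l"
  shows "poly (pderiv (\<Prod>l\<in>S. [:-a l,1:]^k l)) x / poly (\<Prod>l\<in>S. [:-a l,1:]^k l) x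
       = (\<Sum>l\<in>S. of_nat (k l) / (x - a l))"
proof -
  have "poly (\<Prod>l\<in>S. [:-a l,1:]^k l) x \<noteq> 0"
    using assms by (simp add: poly_prod)
  then show ?thesis using poly_pderiv_prod_lin[OF assms, of k] by simp
qed

lemma norm_mult_minus1:
  fixes z w :: complex
  assumes "norm (z - 1) \<le> a" "norm (w - 1) \<le> b"
  shows "norm (z * w - 1) \<le> (1 + a) * (1 + b) - 1"
proof -
  have a0: "0 \<le> a" using assms(1) norm_ge_zero order_trans by blast
  have "z * w - 1 = (z - 1) * (w - 1) + (z - 1) + (w - 1)" by (simp add: algebra_simps)
  then have "norm (z * w - 1) \<le> norm ((z - 1) * (w - 1)) + norm (z-1) + norm (w-1)"
    by (metis norm_triangle_le norm_triangle_ineq add_right_mono)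
  also have "\<dots> = norm (z-1) * norm (w-1) + norm (z-1) + norm (w-1)" by (simp add: norm_mult)
  also have "\<dots> \<le> a * b + a + b"
    using assms a0 by (intro add_mono mult_mono) auto
  finally show ?thesis by (simp add: algebra_simps)
qed

lemma norm_prod_minus1:
  fixes z :: "nat \<Rightarrow> complex"
  assumes "finite S" "\<forall>l\<in>S. norm (z l - 1) \<le> a l"
  shows "norm ((\<Prod>l\<in>S. z l) - 1) \<le> (\<Prod>l\<in>S. 1 + a l) - 1"
  using assms
proof (induction S rule: finite_induct)
  case empty then show ?case by simp
next
  case (insert l S)
  then show ?case using norm_mult_minus1[of "z l" "a l" "prod z S" "(\<Prod>l\<in>S. 1 + a l) - 1"]
    by simp
qed

lemma norm_power_minus1:
  fixes z :: complex
  assumes "norm (z - 1) \<le> a"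
  shows "norm (z ^ k - 1) \<le> (1 + a) ^ k - 1"
  using norm_prod_minus1[of "{..<k}" "\<lambda>_. z" "\<lambda>_. a"] assms by simp

lemma ident:
  fixes a u w e T :: complex
  assumes "w \<noteq> 0" "u \<noteq> 0" "w = u + e"
  shows "a / w - a / u + a / u^2 * T = a / u^2 * (T - e + e^2 / w)"
proof -
  have "a / w - a / u + a / u^2 * T - a / u^2 * (T - e + e^2 / w)
      = a * (u*u - u*w + e*w - e*e) / (u^2 * w)"
    using assms(1,2) by (simp add: field_simps power2_eq_square)
  also have "u*u - u*w + e*w - e*e = 0" using assms(3) by (simp add: algebra_simps)
  finally show ?thesis by simp
qed

lemma convex_pow:
  fixes x t :: real
  assumes "0 \<le> x" "0 \<le> t" "t \<le> 1"
  shows "(1 + t * x) ^ k \<le> 1 + t * ((1 + x) ^ k - 1)"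
proof (induction k)
  case 0 then show ?case by simp
next
  case (Suc k)
  define P where "P = (1 + x) ^ k - 1"
  have P0: "P \<ge> 0" unfolding P_def using assms by (simp add: one_le_power)
  have "(1 + t * x) ^ Suc k = (1 + t*x) * (1 + t*x)^k" by simp
  also have "\<dots> \<le> (1 + t*x) * (1 + t * P)"
    using Suc assms unfolding P_def by (intro mult_left_mono) auto
  also have "\<dots> = 1 + t*P + t*x + t*t*x*P" by (simp add: algebra_simps)
  also have "\<dots> \<le> 1 + t*P + t*x + t*x*P"
    using assms P0 by (simp add: mult_left_le_one_le mult_le_cancel_right1 mult_nonneg_nonneg mult_right_le_one_le mult_mono)
  also have "\<dots> = 1 + t * ((1 + x) ^ Suc k - 1)" unfolding P_def by (simp add: algebra_simps)
  finally show ?case .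
qed


definition betaf :: "nat \<Rightarrow> (nat \<Rightarrow> nat) \<Rightarrow> (nat \<Rightarrow> complex) \<Rightarrow> (nat \<Rightarrow> complex) \<Rightarrow> nat \<Rightarrow> complex" where
  "betaf m alpha r x j = (x j - r j) / of_nat (alpha j) *
     (\<Sum>l\<in>{..<m}-{j}. of_nat (alpha l) / (x j - r l) - of_nat (alpha l) / (x j - x l))"

definition Gf :: "nat \<Rightarrow> (nat \<Rightarrow> nat) \<Rightarrow> (nat \<Rightarrow> complex) \<Rightarrow> (nat \<Rightarrow> complex) \<Rightarrow> nat \<Rightarrow> complex" where
  "Gf m alpha r x j = (\<Prod>l\<in>{..<m}-{j}. (1 + (x l - r l) / (x j - x l)) ^ alpha l)"

definition Tf :: "complex poly \<Rightarrow> nat \<Rightarrow> (nat \<Rightarrow> nat) \<Rightarrow> (nat \<Rightarrow> complex) \<Rightarrow> nat \<Rightarrow> complex" where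
  "Tf A m alpha x j = poly A (x j) * (Sfun A m alpha j x (x j) / of_nat (alpha j)) ^ (alpha j - 1)
      / poly (Qpoly m alpha j x) (x j)"

context
  fixes A :: "complex poly" and m n :: nat and alpha :: "nat \<Rightarrow> nat"
    and r x :: "nat \<Rightarrow> complex" and c t D :: real
  assumes alpha_pos: "\<forall>i<m. alpha i > 0"
    and n_def: "n = (\<Sum>i<m. alpha i)"
    and A_fact: "A = (\<Prod>i<m. [:- r i, 1:] ^ alpha i)"
    and D_pos: "D > 0" and c_pos: "c > 0" and t_pos: "t > 0" and t_le1: "t \<le> 1"
    and sep_xx: "\<forall>i<m. \<forall>j<m. i \<noteq> j \<longrightarrow> D \<le> cmod (x i - x j)"
    and sep_xr: "\<forall>i<m. \<forall>j<m. i \<noteq> j \<longrightarrow> D \<le> cmod (x i - r j)"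
    and err: "\<forall>i<m. cmod (x i - r i) \<le> c * t"
    and sdef: "step_defined A m alpha x"
begin

lemma polyA: "poly A y = (\<Prod>l<m. (y - r l) ^ alpha l)"
  unfolding A_fact by (simp add: poly_prod)

lemma e_nz: assumes "j < m" shows "x j \<noteq> r j"
proof
  assume h: "x j = r j"
  have "poly A (x j) \<noteq> 0" using sdef assms unfolding step_defined_def by blast
  moreover have "poly A (x j) = 0"
    unfolding polyA using assms h alpha_pos by (auto intro!: prod_zero bexI[of _ j])
  ultimately show False by simp
qed

lemma x_ne_r: assumes "j < m" "l < m" shows "x j \<noteq> r l"
proof (cases "j = l")
  case True then show ?thesis using e_nz assms by simp
next
  case False
  then have "D \<le> cmod (x j - r l)" using sep_xr assms by blast
  then show ?thesis using D_pos by auto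
qed

lemma x_ne_x: assumes "j < m" "l < m" "l \<noteq> j" shows "x j \<noteq> x l"
proof -
  have "D \<le> cmod (x j - x l)" using sep_xx assms by blast
  then show ?thesis using D_pos by auto
qed

lemma S_eq: assumes "j < m"
  shows "Sfun A m alpha j x (x j) = of_nat (alpha j) / (x j - r j)
     + (\<Sum>l\<in>{..<m}-{j}. of_nat (alpha l) / (x j - r l) - of_nat (alpha l) / (x j - x l))"
proof -
  have 1: "poly (pderiv A) (x j) / poly A (x j) = (\<Sum>l<m. of_nat (alpha l) / (x j - r l))"
    unfolding A_fact using x_ne_r assms by (intro logderiv_prod_lin) auto
  have 2: "poly (pderiv (Qpoly m alpha j x)) (x j) / poly (Qpoly m alpha j x) (x j)
       = (\<Sum>l\<in>{..<m}-{j}. of_nat (alpha l) / (x j - x l))"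
    unfolding Qpoly_def using x_ne_x assms by (intro logderiv_prod_lin) auto
  have 3: "(\<Sum>l<m. of_nat (alpha l) / (x j - r l)) = of_nat (alpha j) / (x j - r j)
      + (\<Sum>l\<in>{..<m}-{j}. of_nat (alpha l) / (x j - r l))"
    using assms by (subst sum.remove[of _ j]) auto
  show ?thesis unfolding Sfun_def 1 2 3 by (simp add: sum_subtractf)
qed

lemma T_eq: assumes "j < m"
  shows "Tf A m alpha x j = (x j - r j) * (1 + betaf m alpha r x j) ^ (alpha j - 1) * Gf m alpha r x j"
proof -
  define e where "e = x j - r j"
  define a where "a = alpha j"
  define \<Sigma> where "\<Sigma> = (\<Sum>l\<in>{..<m}-{j}. of_nat (alpha l) / (x j - r l) - of_nat (alpha l) / (x j - x l))"
  define Q where "Q = (\<Prod>l\<in>{..<m}-{j}. (x j - x l) ^ alpha l)"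
  have e0: "e \<noteq> 0" using e_nz assms e_def by simp
  have a0: "a > 0" using alpha_pos assms a_def by simp
  have Q0: "Q \<noteq> 0" unfolding Q_def using x_ne_x assms by auto
  have QQ: "poly (Qpoly m alpha j x) (x j) = Q" unfolding Qpoly_def Q_def by (simp add: poly_prod)
  have S: "Sfun A m alpha j x (x j) / of_nat a = (1 + betaf m alpha r x j) / e"
    unfolding S_eq[OF assms] betaf_def using e0 a0 by (simp add: e_def a_def \<Sigma>_def field_simps)
  have PA: "poly A (x j) = e ^ a * (\<Prod>l\<in>{..<m}-{j}. (x j - r l) ^ alpha l)"
    unfolding polyA e_def a_def using assms by (subst prod.remove[of _ j]) auto
  have PR: "(\<Prod>l\<in>{..<m}-{j}. (x j - r l) ^ alpha l) = Q * Gf m alpha r x j"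
    unfolding Q_def Gf_def prod.distrib[symmetric] power_mult_distrib[symmetric]
  proof (rule prod.cong[OF refl])
    fix l assume "l \<in> {..<m}-{j}"
    then have "x j - x l \<noteq> 0" using x_ne_x assms by auto
    then have "x j - r l = (x j - x l) * (1 + (x l - r l) / (x j - x l))"
      by (simp add: field_simps)
    then show "(x j - r l) ^ alpha l = ((x j - x l) * (1 + (x l - r l) / (x j - x l))) ^ alpha l"
      by simp
  qed
  obtain b where b: "a = Suc b" using a0 gr0_implies_Suc by blast
  have "Tf A m alpha x j = e ^ a * (Q * Gf m alpha r x j) * ((1 + betaf m alpha r x j) / e) ^ b / Q"
    unfolding Tf_def QQ PA PR S[unfolded a_def] using b a_def by simp
  also have "\<dots> = e * (1 + betaf m alpha r x j) ^ b * Gf m alpha r x j"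
    using e0 Q0 b by (simp add: field_simps power_divide)
  finally show ?thesis using b a_def e_def by simp
qed


lemma term_bound: assumes "j < m" "l < m" "l \<noteq> j"
  shows "cmod (of_nat (alpha l) / (x j - r l) - of_nat (alpha l) / (x j - x l))
         \<le> real (alpha l) * (c * t) / D^2"
proof -
  have n1: "x j - r l \<noteq> 0" "x j - x l \<noteq> 0" using x_ne_r x_ne_x assms by auto
  have "of_nat (alpha l) / (x j - r l) - of_nat (alpha l) / (x j - x l)
      = - (of_nat (alpha l) * (x l - r l)) / ((x j - r l) * (x j - x l))"
    using n1 by (simp add: field_simps)
  then have "cmod (of_nat (alpha l) / (x j - r l) - of_nat (alpha l) / (x j - x l))
      = real (alpha l) * cmod (x l - r l) / (cmod (x j - r l) * cmod (x j - x l))"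
    by (simp add: norm_mult norm_divide)
  also have "\<dots> \<le> real (alpha l) * (c * t) / (D * D)"
  proof (rule frac_le)
    show "0 \<le> real (alpha l) * (c * t)" using c_pos t_pos by simp
    show "real (alpha l) * cmod (x l - r l) \<le> real (alpha l) * (c * t)"
      using err assms by (intro mult_left_mono) auto
    show "0 < D * D" using D_pos by simp
    show "D * D \<le> cmod (x j - r l) * cmod (x j - x l)"
      using sep_xr sep_xx assms D_pos by (intro mult_mono) auto
  qed
  finally show ?thesis by (simp add: power2_eq_square)
qed

lemma sum_alpha_le: "(\<Sum>l\<in>{..<m}-{j}. real (alpha l)) \<le> real n"
proof -
  have "(\<Sum>l\<in>{..<m}-{j}. alpha l) \<le> (\<Sum>l<m. alpha l)" by (rule sum_mono2) auto
  then show ?thesis unfolding n_def by (metis of_nat_le_iff of_nat_sum)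
qed

lemma sum_alpha_le_nat: "(\<Sum>l\<in>{..<m}-{j}. alpha l) \<le> n"
  unfolding n_def by (rule sum_mono2) auto

lemma alpha_le_n: assumes "j < m" shows "alpha j \<le> n"
  unfolding n_def using assms by (intro member_le_sum) auto

lemma beta_bound: assumes "j < m"
  shows "cmod (betaf m alpha r x j) \<le> real n * (c / D)^2 * t^2"
proof -
  have a1: "real (alpha j) \<ge> 1" using alpha_pos assms by (simp add: Suc_le_eq)
  have S: "cmod (\<Sum>l\<in>{..<m}-{j}. of_nat (alpha l) / (x j - r l) - of_nat (alpha l) / (x j - x l))
     \<le> real n * (c * t) / D^2"
  proof -
    have "cmod (\<Sum>l\<in>{..<m}-{j}. of_nat (alpha l) / (x j - r l) - of_nat (alpha l) / (x j - x l))
       \<le> (\<Sum>l\<in>{..<m}-{j}. cmod (of_nat (alpha l) / (x j - r l) - of_nat (alpha l) / (x j - x l)))"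
      by (rule norm_sum)
    also have "\<dots> \<le> (\<Sum>l\<in>{..<m}-{j}. real (alpha l) * ((c * t) / D^2))"
      using term_bound assms by (intro sum_mono) auto
    also have "\<dots> = (\<Sum>l\<in>{..<m}-{j}. real (alpha l)) * ((c * t) / D^2)"
      by (simp only: sum_distrib_right)
    also have "\<dots> \<le> real n * ((c * t) / D^2)"
      using sum_alpha_le c_pos t_pos D_pos by (intro mult_right_mono) auto
    finally show ?thesis by simp
  qed
  have "cmod (betaf m alpha r x j) = cmod (x j - r j) / real (alpha j) *
     cmod (\<Sum>l\<in>{..<m}-{j}. of_nat (alpha l) / (x j - r l) - of_nat (alpha l) / (x j - x l))"
    unfolding betaf_def by (simp add: norm_mult norm_divide)
  also have "\<dots> \<le> (c * t) * (real n * (c * t) / D^2)"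
  proof (rule mult_mono)
    have "cmod (x j - r j) / real (alpha j) \<le> cmod (x j - r j)"
    proof -
      have "cmod (x j - r j) * 1 \<le> cmod (x j - r j) * real (alpha j)"
        using a1 by (intro mult_left_mono) auto
      then show ?thesis using a1 by (simp add: divide_le_eq)
    qed
    moreover have "cmod (x j - r j) \<le> c * t" using err assms by blast
    ultimately show "cmod (x j - r j) / real (alpha j) \<le> c * t" by linarith
  qed (use S c_pos t_pos in auto)
  also have "\<dots> = real n * (c / D)^2 * t^2" by (simp add: power2_eq_square)
  finally show ?thesis .
qed

lemma G_bound: assumes "j < m"
  shows "cmod (Gf m alpha r x j - 1) \<le> (1 + c / D * t) ^ n - 1"
proof -
  have ht: "0 \<le> c / D * t" using c_pos D_pos t_pos by simp
  have g: "cmod ((x l - r l) / (x j - x l)) \<le> c / D * t" if "l \<in> {..<m}-{j}" for l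
  proof -
    have "cmod ((x l - r l) / (x j - x l)) = cmod (x l - r l) / cmod (x j - x l)"
      by (simp add: norm_divide)
    also have "\<dots> \<le> (c * t) / D"
      using that err sep_xx assms D_pos c_pos t_pos by (intro frac_le) auto
    finally show ?thesis by simp
  qed
  have "cmod (Gf m alpha r x j - 1) \<le> (\<Prod>l\<in>{..<m}-{j}. 1 + ((1 + c / D * t) ^ alpha l - 1)) - 1"
    unfolding Gf_def
  proof (rule norm_prod_minus1)
    show "\<forall>l\<in>{..<m}-{j}. cmod ((1 + (x l - r l) / (x j - x l)) ^ alpha l - 1) \<le> (1 + c / D * t) ^ alpha l - 1"
      using norm_power_minus1 g by fastforce
  qed simp
  also have "\<dots> = (1 + c / D * t) ^ (\<Sum>l\<in>{..<m}-{j}. alpha l) - 1"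
    by (simp add: power_sum)
  also have "\<dots> \<le> (1 + c / D * t) ^ n - 1"
    using sum_alpha_le_nat ht by (simp add: power_increasing)
  finally show ?thesis .
qed

lemma T_minus: assumes "j < m"
  shows "cmod (Tf A m alpha x j - (x j - r j))
     \<le> c * t * (t * (((1 + real n * (c / D)^2) ^ (n - 1) - 1) + ((1 + c / D) ^ n - 1)
                    + ((1 + real n * (c / D)^2) ^ (n - 1) - 1) * ((1 + c / D) ^ n - 1)))"
proof -
  define N where "N = (1 + real n * (c / D)^2) ^ (n - 1) - 1"
  define M where "M = (1 + c / D) ^ n - 1"
  have ht: "0 \<le> c / D" using c_pos D_pos by simp
  have t2: "t^2 \<le> t" using t_pos t_le1 by (simp add: power2_eq_square mult_left_le_one_le)
  have N0: "N \<ge> 0" unfolding N_def using ht by (simp add: one_le_power)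
  have M0: "M \<ge> 0" unfolding M_def using ht by (simp add: one_le_power)
  have b1: "cmod ((1 + betaf m alpha r x j) ^ (alpha j - 1) - 1) \<le> t * N"
  proof -
    have "cmod ((1 + betaf m alpha r x j) ^ (alpha j - 1) - 1) \<le> (1 + real n * (c / D)^2 * t^2) ^ (alpha j - 1) - 1"
      by (rule norm_power_minus1) (simp add: beta_bound[OF assms])
    also have "\<dots> \<le> (1 + t * (real n * (c / D)^2)) ^ (n - 1) - 1"
    proof -
      have "(1 + real n * (c / D)^2 * t^2) ^ (alpha j - 1) \<le> (1 + real n * (c / D)^2 * t^2) ^ (n - 1)"
        by (rule power_increasing[OF diff_le_mono[OF alpha_le_n[OF assms]]]) simp
      also have "\<dots> \<le> (1 + t * (real n * (c / D)^2)) ^ (n - 1)"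
      proof (rule power_mono)
        have "real n * (c / D)^2 * t^2 \<le> real n * (c / D)^2 * t"
          using t2 by (intro mult_left_mono) auto
        then show "1 + real n * (c / D)^2 * t^2 \<le> 1 + t * (real n * (c / D)^2)"
          by (simp add: algebra_simps)
      qed simp
      finally show ?thesis by simp
    qed
    also have "\<dots> \<le> t * N"
    proof -
      have "(1 + t * (real n * (c / D)^2)) ^ (n - 1) \<le> 1 + t * ((1 + real n * (c / D)^2) ^ (n - 1) - 1)"
        by (rule convex_pow) (use t_pos t_le1 in auto)
      then show ?thesis unfolding N_def by linarith
    qed
    finally show ?thesis .
  qed
  have g1: "cmod (Gf m alpha r x j - 1) \<le> t * M"
  proof -
    have "(1 + t * (c / D)) ^ n \<le> 1 + t * ((1 + c / D) ^ n - 1)"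
      using convex_pow[of "c / D" t n] ht t_pos t_le1 by simp
    then show ?thesis using G_bound[OF assms] unfolding M_def by (simp add: mult.commute)
  qed
  have "cmod ((1 + betaf m alpha r x j) ^ (alpha j - 1) * Gf m alpha r x j - 1) \<le> (1 + t*N) * (1 + t*M) - 1"
    by (rule norm_mult_minus1[OF b1 g1])
  also have "\<dots> \<le> t * (N + M + N * M)"
  proof -
    have "t * t * (N * M) \<le> t * (N * M)" using t_pos t_le1 N0 M0 by (simp add: mult_left_le_one_le)
    then show ?thesis by (simp add: algebra_simps)
  qed
  finally have *: "cmod ((1 + betaf m alpha r x j) ^ (alpha j - 1) * Gf m alpha r x j - 1) \<le> t * (N + M + N * M)" .
  have "Tf A m alpha x j - (x j - r j) = (x j - r j) * ((1 + betaf m alpha r x j) ^ (alpha j - 1) * Gf m alpha r x j - 1)"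
    unfolding T_eq[OF assms] by (simp add: algebra_simps)
  then have "cmod (Tf A m alpha x j - (x j - r j)) = cmod (x j - r j) * cmod ((1 + betaf m alpha r x j) ^ (alpha j - 1) * Gf m alpha r x j - 1)"
    by (simp add: norm_mult)
  also have "\<dots> \<le> c * t * (t * (N + M + N * M))"
    using err assms * c_pos t_pos by (intro mult_mono) auto
  finally show ?thesis unfolding N_def M_def .
qed


lemma corr_eq: assumes "i < m"
  shows "corr A m alpha i x = of_nat (alpha i) / (x i - r i)
    + (\<Sum>j\<in>{..<m}-{i}. of_nat (alpha j) / (x i - x j)^2
          * (Tf A m alpha x j - (x j - r j) + (x j - r j)^2 / (x i - r j)))"
proof -
  have 1: "(\<Sum>j\<in>{..<m}-{i}.
          of_nat (alpha j) * inverse ((x j - x i) ^ 2) * poly A (x j)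
          * (Sfun A m alpha j x (x j) / of_nat (alpha j)) ^ (alpha j - 1)
          / poly (Qpoly m alpha j x) (x j))
       = (\<Sum>j\<in>{..<m}-{i}. of_nat (alpha j) / (x i - x j)^2 * Tf A m alpha x j)"
  proof (rule sum.cong[OF refl])
    fix j assume "j \<in> {..<m}-{i}"
    have sq: "(x j - x i)^2 = (x i - x j)^2" by (simp add: power2_commute)
    show "of_nat (alpha j) * inverse ((x j - x i) ^ 2) * poly A (x j)
          * (Sfun A m alpha j x (x j) / of_nat (alpha j)) ^ (alpha j - 1)
          / poly (Qpoly m alpha j x) (x j)
        = of_nat (alpha j) / (x i - x j)^2 * Tf A m alpha x j"
      unfolding Tf_def sq by (simp add: divide_inverse mult.assoc)
  qed
  have 2: "(\<Sum>j\<in>{..<m}-{i}. of_nat (alpha j) / (x i - r j) - of_nat (alpha j) / (x i - x j))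
     + (\<Sum>j\<in>{..<m}-{i}. of_nat (alpha j) / (x i - x j)^2 * Tf A m alpha x j)
     = (\<Sum>j\<in>{..<m}-{i}. of_nat (alpha j) / (x i - x j)^2
          * (Tf A m alpha x j - (x j - r j) + (x j - r j)^2 / (x i - r j)))"
    unfolding sum.distrib[symmetric]
  proof (rule sum.cong[OF refl])
    fix j assume j: "j \<in> {..<m}-{i}"
    have n1: "x i - r j \<noteq> 0" "x i - x j \<noteq> 0" using x_ne_r x_ne_x assms j by auto
    show "of_nat (alpha j) / (x i - r j) - of_nat (alpha j) / (x i - x j)
         + of_nat (alpha j) / (x i - x j)^2 * Tf A m alpha x j
       = of_nat (alpha j) / (x i - x j)^2
          * (Tf A m alpha x j - (x j - r j) + (x j - r j)^2 / (x i - r j))"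
      using n1 by (intro ident) auto
  qed
  show ?thesis unfolding corr_def S_eq[OF assms] 1 2[symmetric] by (simp only: add.assoc)
qed

lemma R_bound: assumes "i < m"
  shows "cmod (\<Sum>j\<in>{..<m}-{i}. of_nat (alpha j) / (x i - x j)^2
          * (Tf A m alpha x j - (x j - r j) + (x j - r j)^2 / (x i - r j)))
    \<le> real n * (c * t^2 * ((((1 + real n * (c / D)^2) ^ (n - 1) - 1) + ((1 + c / D) ^ n - 1)
                    + ((1 + real n * (c / D)^2) ^ (n - 1) - 1) * ((1 + c / D) ^ n - 1)) + c / D) / D^2)"
proof -
  define K where "K = (((1 + real n * (c / D)^2) ^ (n - 1) - 1) + ((1 + c / D) ^ n - 1)
                    + ((1 + real n * (c / D)^2) ^ (n - 1) - 1) * ((1 + c / D) ^ n - 1))"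
  have ht: "0 \<le> c / D" using c_pos D_pos by simp
  have p1: "(1 + real n * (c / D)^2) ^ (n - 1) \<ge> 1" by (rule one_le_power) simp
  have p2: "(1 + c / D) ^ n \<ge> 1" using ht by (intro one_le_power) simp
  have K0: "K \<ge> 0" unfolding K_def using p1 p2
    by (intro add_nonneg_nonneg mult_nonneg_nonneg) (simp_all del: One_nat_def)
  have tb: "cmod (of_nat (alpha j) / (x i - x j)^2
          * (Tf A m alpha x j - (x j - r j) + (x j - r j)^2 / (x i - r j)))
       \<le> real (alpha j) * (c * t^2 * (K + c / D) / D^2)" if j: "j \<in> {..<m}-{i}" for j
  proof -
    have dxx: "D \<le> cmod (x i - x j)" and dxr: "D \<le> cmod (x i - r j)"
      using sep_xx sep_xr assms j by auto
    have ej: "cmod (x j - r j) \<le> c * t" using err j by auto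
    have a: "cmod (Tf A m alpha x j - (x j - r j)) \<le> c * t * (t * K)"
      using T_minus j unfolding K_def by auto
    have b: "cmod ((x j - r j)^2 / (x i - r j)) \<le> (c * t)^2 / D"
      unfolding norm_divide norm_power
      using ej dxr D_pos by (intro frac_le power_mono) auto
    have "cmod (Tf A m alpha x j - (x j - r j) + (x j - r j)^2 / (x i - r j))
        \<le> c * t * (t * K) + (c * t)^2 / D"
      using a b norm_triangle_ineq order_trans add_mono by (smt (verit))
    also have "\<dots> = c * t^2 * (K + c / D)" by (simp add: power2_eq_square field_simps)
    finally have c1: "cmod (Tf A m alpha x j - (x j - r j) + (x j - r j)^2 / (x i - r j)) \<le> c * t^2 * (K + c / D)" .
    have "cmod (of_nat (alpha j) / (x i - x j)^2
          * (Tf A m alpha x j - (x j - r j) + (x j - r j)^2 / (x i - r j)))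
       = real (alpha j) / cmod (x i - x j)^2 * cmod (Tf A m alpha x j - (x j - r j) + (x j - r j)^2 / (x i - r j))"
      by (simp add: norm_mult norm_divide norm_power)
    also have "\<dots> \<le> real (alpha j) / D^2 * (c * t^2 * (K + c / D))"
    proof (rule mult_mono)
      show "real (alpha j) / cmod (x i - x j)^2 \<le> real (alpha j) / D^2"
      proof (rule divide_left_mono)
        show "D^2 \<le> cmod (x i - x j)^2" using dxx D_pos by (intro power_mono) auto
        have "0 < cmod (x i - x j)" using dxx D_pos by linarith
        then show "0 < cmod (x i - x j)^2 * D^2" using D_pos by simp
      qed simp
    qed (use c1 D_pos in auto)
    finally show ?thesis by simp
  qed
  have "cmod (\<Sum>j\<in>{..<m}-{i}. of_nat (alpha j) / (x i - x j)^2
          * (Tf A m alpha x j - (x j - r j) + (x j - r j)^2 / (x i - r j)))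
     \<le> (\<Sum>j\<in>{..<m}-{i}. real (alpha j) * (c * t^2 * (K + c / D) / D^2))"
    by (rule order_trans[OF norm_sum sum_mono]) (rule tb)
  also have "\<dots> = (\<Sum>j\<in>{..<m}-{i}. real (alpha j)) * (c * t^2 * (K + c / D) / D^2)"
    by (simp only: sum_distrib_right)
  also have "\<dots> \<le> real n * (c * t^2 * (K + c / D) / D^2)"
    using sum_alpha_le K0 ht c_pos D_pos by (intro mult_right_mono) auto
  finally show ?thesis unfolding K_def .
qed


lemma one_step: assumes i: "i < m"
  and Bc: "2 * (c^2 * real n / D^2 * (c / D + ((((1 + real n * (c / D)^2) ^ (n - 1) - 1) + ((1 + c / D) ^ n - 1)
                    + ((1 + real n * (c / D)^2) ^ (n - 1) - 1) * ((1 + c / D) ^ n - 1)))))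
            < real (alpha i)"
  and ei: "cmod (x i - r i) < c * t"
  shows "cmod (step A m alpha x i - r i) < c * t^4"
proof -
  define K where "K = (((1 + real n * (c / D)^2) ^ (n - 1) - 1) + ((1 + c / D) ^ n - 1)
                    + ((1 + real n * (c / D)^2) ^ (n - 1) - 1) * ((1 + c / D) ^ n - 1))"
  define B where "B = c^2 * real n / D^2 * (c / D + K)"
  define e where "e = x i - r i"
  define R where "R = (\<Sum>j\<in>{..<m}-{i}. of_nat (alpha j) / (x i - x j)^2
          * (Tf A m alpha x j - (x j - r j) + (x j - r j)^2 / (x i - r j)))"
  define a where "a = real (alpha i)"
  have ht: "0 \<le> c / D" using c_pos D_pos by simp
  have p1: "(1 + real n * (c / D)^2) ^ (n - 1) \<ge> 1" by (rule one_le_power) simp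
  have p2: "(1 + c / D) ^ n \<ge> 1" using ht by (intro one_le_power) simp
  have K0: "K \<ge> 0" unfolding K_def using p1 p2
    by (intro add_nonneg_nonneg mult_nonneg_nonneg) (simp_all del: One_nat_def)
  have B0: "B \<ge> 0" unfolding B_def using K0 ht by simp
  have Ba: "2 * B < a" using Bc unfolding B_def K_def a_def .
  have e0: "e \<noteq> 0" using e_nz i e_def by simp
  have t3: "t^3 \<le> 1" using t_pos t_le1 by (simp add: power_le_one)
  have t3p: "t^3 > 0" using t_pos by simp
  have Rb: "cmod R \<le> real n * (c * t^2 * (K + c / D) / D^2)"
    using R_bound[OF i] unfolding R_def K_def .
  have X: "cmod (e * R) \<le> t^3 * B"
  proof -
    have "cmod (e * R) = cmod e * cmod R" by (simp add: norm_mult)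
    also have "\<dots> \<le> (c * t) * (real n * (c * t^2 * (K + c / D) / D^2))"
      using ei Rb c_pos t_pos unfolding e_def by (intro mult_mono) auto
    also have "\<dots> = t^3 * B" unfolding B_def by (simp add: power2_eq_square power3_eq_cube field_simps)
    finally show ?thesis .
  qed
  have "t^3 * B \<le> B" by (rule mult_left_le_one_le) (use B0 t3p t3 in auto)
  then have XB: "cmod (e * R) \<le> B" using X by linarith
  have Y: "cmod (of_real a + e * R) \<ge> a - cmod (e * R)"
  proof -
    have "cmod (of_real a :: complex) \<le> cmod (of_real a + e * R) + cmod (e * R)"
      by (metis add_diff_cancel norm_triangle_ineq4 order_trans order_refl)
    then show ?thesis unfolding a_def by simp
  qed
  have Ypos: "cmod (of_real a + e * R) > B" using Y XB Ba by linarith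
  have Y0: "of_real a + e * R \<noteq> 0" using Ypos B0 by auto
  have corr: "corr A m alpha i x = (of_real a + e * R) / e"
    unfolding corr_eq[OF i] using e0 by (simp add: a_def e_def R_def field_simps)
  have "step A m alpha x i - r i = e * (e * R) / (of_real a + e * R)"
    unfolding step_def corr using e0 Y0 by (simp add: a_def e_def field_simps)
  then have "cmod (step A m alpha x i - r i) = cmod e * (cmod (e * R) / cmod (of_real a + e * R))"
    by (simp add: norm_mult norm_divide)
  also have "\<dots> \<le> cmod e * t^3"
  proof (rule mult_left_mono)
    have "cmod (e * R) \<le> t^3 * cmod (of_real a + e * R)"
      using X Ypos t3p B0 by (smt (verit) mult_left_mono)
    then show "cmod (e * R) / cmod (of_real a + e * R) \<le> t^3"
      using Ypos B0 t_pos by (simp add: divide_le_eq)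
  qed simp
  also have "\<dots> < c * t * t^3"
    using ei t3p unfolding e_def by (intro mult_strict_right_mono) auto
  also have "\<dots> = c * t^4" by (simp add: power_numeral_reduce)
  finally show ?thesis .
qed

end


theorem mainTheorem1:
  fixes A :: "complex poly" and n m :: nat and alpha :: "nat \<Rightarrow> nat"
    and r x0 :: "nat \<Rightarrow> complex" and c q d M N :: real
  assumes m2: "m \<ge> 2"
    and roots_distinct: "inj_on r {..<m}"
    and alpha_pos: "\<forall>i<m. alpha i > 0"
    and n_def: "n = (\<Sum>i<m. alpha i)"
    and A_fact: "A = (\<Prod>i<m. [:- r i, 1:] ^ alpha i)"
    and d_def: "d = Min {cmod (r i - r j) | i j. i < m \<and> j < m \<and> i \<noteq> j}"
    and c_pos: "c > 0" and q_pos: "q > 0" and q_lt1: "q < 1"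
    and d2c: "d - 2 * c > 0"
    and M_def: "M = (1 + c / (d - 2 * c)) ^ n - 1"
    and N_def: "N = (1 + real n * (c / (d - 2 * c)) ^ 2) ^ (n - 1) - 1"
    and cond: "\<forall>i<m. 2 * c ^ 2 * real n * inverse ((d - 2 * c) ^ 2)
                 * (c / (d - 2 * c) + (1 + c / (d - 2 * c)) * (N + M * N + M))
               < real (alpha i)"
    and init: "\<forall>i<m. cmod (x0 i - r i) < c * q"
    and defined: "\<forall>k. step_defined A m alpha (iter A m alpha x0 k)"
  shows "\<forall>k. \<forall>i<m. cmod (iter A m alpha x0 k i - r i) < c * q ^ (4 ^ k)"
proof -
  define D where "D = d - 2 * c"
  have D_pos: "D > 0" using d2c D_def by simp
  have fin: "finite {cmod (r i - r j) | i j. i < m \<and> j < m \<and> i \<noteq> j}"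
  proof -
    have "{cmod (r i - r j) | i j. i < m \<and> j < m \<and> i \<noteq> j}
        \<subseteq> (\<lambda>(i,j). cmod (r i - r j)) ` ({..<m} \<times> {..<m})" by auto
    then show ?thesis by (rule finite_subset) auto
  qed
  have dle: "d \<le> cmod (r i - r j)" if "i < m" "j < m" "i \<noteq> j" for i j
    unfolding d_def using that by (intro Min_le fin) blast
  have sep: "D \<le> cmod (y i - y j) \<and> D \<le> cmod (y i - r j)"
    if y: "\<forall>l<m. cmod (y l - r l) \<le> c" and ij: "i < m" "j < m" "i \<noteq> j" for y :: "nat \<Rightarrow> complex" and i j
  proof -
    have a: "cmod (y i - r i) \<le> c" "cmod (y j - r j) \<le> c" using y ij by auto
    have t1: "cmod (r i - r j) \<le> cmod (y i - r i) + cmod (y i - y j) + cmod (y j - r j)"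
    proof -
      have "r i - r j = - (y i - r i) + (y i - y j) + (y j - r j)" by simp
      then have "cmod (r i - r j) = cmod (- (y i - r i) + (y i - y j) + (y j - r j))" by simp
      also have "\<dots> \<le> cmod (- (y i - r i) + (y i - y j)) + cmod (y j - r j)" by (rule norm_triangle_ineq)
      also have "\<dots> \<le> cmod (- (y i - r i)) + cmod (y i - y j) + cmod (y j - r j)"
        using norm_triangle_ineq by (intro add_right_mono) blast
      finally show ?thesis by (simp add: norm_minus_commute)
    qed
    have t2: "cmod (r i - r j) \<le> cmod (y i - r i) + cmod (y i - r j)"
    proof -
      have "r i - r j = - (y i - r i) + (y i - r j)" by simp
      then have "cmod (r i - r j) = cmod (- (y i - r i) + (y i - r j))" by simp
      also have "\<dots> \<le> cmod (- (y i - r i)) + cmod (y i - r j)" by (rule norm_triangle_ineq)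
      finally show ?thesis by (simp add: norm_minus_commute)
    qed
    have "d \<le> cmod (r i - r j)" using dle ij by blast
    then show ?thesis using t1 t2 a c_pos unfolding D_def by linarith
  qed
  have cond': "2 * (c^2 * real n / D^2 * (c / D + ((((1 + real n * (c / D)^2) ^ (n - 1) - 1) + ((1 + c / D) ^ n - 1)
                    + ((1 + real n * (c / D)^2) ^ (n - 1) - 1) * ((1 + c / D) ^ n - 1)))))
            < real (alpha i)" if i: "i < m" for i
  proof -
    have ht: "0 \<le> c / D" using c_pos D_pos by simp
    have NN: "N = (1 + real n * (c / D)^2) ^ (n - 1) - 1" using N_def D_def by simp
    have MM: "M = (1 + c / D) ^ n - 1" using M_def D_def by simp
    have p1: "(1 + real n * (c / D)^2) ^ (n - 1) \<ge> 1" by (rule one_le_power) simp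
    have p2: "(1 + c / D) ^ n \<ge> 1" using ht by (intro one_le_power) simp
    have N0: "N \<ge> 0" using p1 NN by simp
    have M0: "M \<ge> 0" using p2 MM by simp
    have X0: "N + M * N + M \<ge> 0" using N0 M0 by simp
    have hX: "0 \<le> (c / D) * (N + M * N + M)" by (rule mult_nonneg_nonneg[OF ht X0])
    have eqX: "(1 + c / D) * (N + M * N + M) = (N + M + N * M) + (c / D) * (N + M * N + M)"
      by (simp add: algebra_simps)
    have "N + M + N * M \<le> (1 + c / D) * (N + M * N + M)"
      using hX eqX by linarith
    then have le1: "c / D + (N + M + N * M) \<le> c / D + (1 + c / D) * (N + M * N + M)" by simp
    have cpos: "0 \<le> 2 * c^2 * real n * inverse (D^2)" by simp
    have "2 * (c^2 * real n / D^2 * (c / D + (N + M + N * M)))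
        = 2 * c^2 * real n * inverse (D^2) * (c / D + (N + M + N * M))"
      by (simp add: divide_inverse)
    also have "\<dots> \<le> 2 * c^2 * real n * inverse (D^2) * (c / D + (1 + c / D) * (N + M * N + M))"
      using le1 cpos by (rule mult_left_mono)
    also have "\<dots> < real (alpha i)" using cond i unfolding D_def by blast
    finally show ?thesis unfolding NN MM .
  qed
  have main: "\<forall>i<m. cmod (iter A m alpha x0 k i - r i) < c * q ^ (4 ^ k)" for k
  proof (induction k)
    case 0 show ?case using init by simp
  next
    case (Suc k)
    define xk where "xk = iter A m alpha x0 k"
    define t where "t = q ^ (4 ^ k)"
    have t_pos: "t > 0" using q_pos t_def by simp
    have t_le1: "t \<le> 1" using q_pos q_lt1 t_def by (simp add: power_le_one)
    have errs: "\<forall>i<m. cmod (xk i - r i) < c * t" using Suc.IH xk_def t_def by simp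
    have err: "\<forall>i<m. cmod (xk i - r i) \<le> c * t" using errs by (simp add: less_imp_le)
    have ct: "c * t \<le> c" using t_le1 c_pos by (simp add: mult_left_le_one_le less_imp_le t_pos)
    have errc: "\<forall>l<m. cmod (xk l - r l) \<le> c" using err ct by (meson order_trans)
    have sxx: "\<forall>i<m. \<forall>j<m. i \<noteq> j \<longrightarrow> D \<le> cmod (xk i - xk j)" using sep[OF errc] by blast
    have sxr: "\<forall>i<m. \<forall>j<m. i \<noteq> j \<longrightarrow> D \<le> cmod (xk i - r j)" using sep[OF errc] by blast
    have sdef: "step_defined A m alpha xk" using defined xk_def by simp
    have q4: "q ^ (4 ^ Suc k) = t ^ 4" unfolding t_def by (simp only: power_Suc mult.commute[of 4] power_mult)
    show ?case
    proof (intro allI impI)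
      fix i assume i: "i < m"
      have "cmod (step A m alpha xk i - r i) < c * t ^ 4"
        by (rule one_step[OF alpha_pos n_def A_fact D_pos c_pos t_pos t_le1 sxx sxr err sdef i cond'[OF i]])
           (use errs i in blast)
      then show "cmod (iter A m alpha x0 (Suc k) i - r i) < c * q ^ (4 ^ Suc k)"
        unfolding q4 xk_def by simp
    qed
  qed
  show ?thesis using main by blast
qed

end
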